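(* Let $k\geq 2$, let $A_1\subseteq A_2$ be sets, and let $F_1\colon[A_1]^k\to\mathcal{P}(A_1)$ and $F_2\colon[A_2]^k\to\mathcal{P}(A_2)$. Let $\Gamma_1,\Gamma_2$ be sets of functions such that $\Gamma_i$ $k$-generates $F_i$ for $i=1,2$, and suppose $\Gamma_2|_{A_1}=\Gamma_1$. Then for every $\bar\gamma\in[A_1]^k$ we have $F_1(\bar\gamma)=F_2(\bar\gamma)\cap A_1$.
   Context: For a set $S$ and $k<\omega$, $[S]^k$ is the set of $k$-element subsets of $S$. Let $A$ be a set and $k\geq 2$. Let $\Gamma$ be a set of functions of the form $\rho\colon[A]^2\to L_\rho$, where each $L_\rho$ is a linear order with order $<_\rho$ (formally $\Gamma$ is a set of pairs $(\rho,L_\rho)$). A map $F\colon[A]^k\to\mathcal{P}(A)$ is said to be $k$-generated by $\Gamma$ if for all $\bar\gamma\in[A]^k$: $x\in F(\bar\gamma)$ if and only if $x\in A$ and for every $\rho\in\Gamma$ and every $\gamma\in\bar\gamma$ there exist $\gamma'\neq\gamma''$ in $\bar\gamma$ with $\rho\{x,\gamma\}\leq_\rho\rho\{\gamma',\gamma''\}$. For $B\subseteq A$, $\Gamma|_B=\{\rho|_{[B]^2}:\rho\in\Gamma\}$ (each with the same linear order $L_\rho$). *)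

theory Defs
  imports Main "HOL-Library.Ramsey" "HOL-Library.FuncSet"
begin

text \<open>A "set of functions" Gamma on A: each element is a pair (rho, L) with
  rho a function on [A]^2 (extensional outside [A]^2) with values in the carrier
  Field L of a linear order L.\<close>
definition pair_fun_family :: "'a set \<Rightarrow> (('a set \<Rightarrow> 'l) \<times> 'l rel) set \<Rightarrow> bool" where
  "pair_fun_family A \<Gamma> \<longleftrightarrow>
     (\<forall>(\<rho>, L) \<in> \<Gamma>. linear_order L \<and> \<rho> \<in> extensional ([A]\<^bsup>2\<^esup>)
        \<and> (\<forall>e \<in> [A]\<^bsup>2\<^esup>. \<rho> e \<in> Field L))"

definition restrict_family :: "'a set \<Rightarrow> (('a set \<Rightarrow> 'l) \<times> 'l rel) set \<Rightarrow> (('a set \<Rightarrow> 'l) \<times> 'l rel) set" where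
  "restrict_family B \<Gamma> = (\<lambda>(\<rho>, L). (restrict \<rho> ([B]\<^bsup>2\<^esup>), L)) ` \<Gamma>"

definition k_generated :: "nat \<Rightarrow> 'a set \<Rightarrow> (('a set \<Rightarrow> 'l) \<times> 'l rel) set \<Rightarrow> ('a set \<Rightarrow> 'a set) \<Rightarrow> bool" where
  "k_generated k A \<Gamma> F \<longleftrightarrow>
     (\<forall>\<gamma>s \<in> [A]\<^bsup>k\<^esup>. \<forall>x. x \<in> F \<gamma>s \<longleftrightarrow>
        x \<in> A \<and> (\<forall>(\<rho>, L) \<in> \<Gamma>. \<forall>\<gamma> \<in> \<gamma>s. \<exists>\<gamma>' \<in> \<gamma>s. \<exists>\<gamma>'' \<in> \<gamma>s.
            \<gamma>' \<noteq> \<gamma>'' \<and> (\<rho> {x, \<gamma>}, \<rho> {\<gamma>', \<gamma>''}) \<in> L))"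

end

theory Submission
  imports Defs
begin

lemma restr_eq:
  assumes "\<rho> \<in> extensional ([A2]\<^bsup>2\<^esup>)" "A1 \<subseteq> A2" "a \<in> A1" "b \<in> A1"
  shows "restrict \<rho> ([A1]\<^bsup>2\<^esup>) {a, b} = \<rho> {a, b}"
proof (cases "a = b")
  case True
  have "{a,b} \<notin> [A1]\<^bsup>2\<^esup>" "{a,b} \<notin> [A2]\<^bsup>2\<^esup>" using True by (auto simp: nsets_def)
  then show ?thesis using assms(1) unfolding extensional_def restrict_def by auto
next
  case False
  then have "{a,b} \<in> [A1]\<^bsup>2\<^esup>" using assms by (auto simp: nsets_def)
  then show ?thesis by simp
qed

theorem lemma2p4:
  fixes k :: nat and A1 A2 :: "'a set" and F1 F2 :: "'a set \<Rightarrow> 'a set"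
    and \<Gamma>1 \<Gamma>2 :: "(('a set \<Rightarrow> 'l) \<times> 'l rel) set"
  assumes "k \<ge> 2" and "A1 \<subseteq> A2"
    and "F1 \<in> [A1]\<^bsup>k\<^esup> \<rightarrow> Pow A1" and "F2 \<in> [A2]\<^bsup>k\<^esup> \<rightarrow> Pow A2"
    and "pair_fun_family A1 \<Gamma>1" and "pair_fun_family A2 \<Gamma>2"
    and "k_generated k A1 \<Gamma>1 F1" and "k_generated k A2 \<Gamma>2 F2"
    and "restrict_family A1 \<Gamma>2 = \<Gamma>1"
  shows "\<forall>\<gamma>s \<in> [A1]\<^bsup>k\<^esup>. F1 \<gamma>s = F2 \<gamma>s \<inter> A1"
proof
  fix \<gamma>s assume g1: "\<gamma>s \<in> [A1]\<^bsup>k\<^esup>"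
  then have g2: "\<gamma>s \<in> [A2]\<^bsup>k\<^esup>" using assms(2) by (auto simp: nsets_def)
  have sub: "\<gamma>s \<subseteq> A1" using g1 by (auto simp: nsets_def)
  show "F1 \<gamma>s = F2 \<gamma>s \<inter> A1"
  proof (intro set_eqI iffI)
    fix x assume x: "x \<in> F1 \<gamma>s"
    then have xA: "x \<in> A1" and c1: "\<forall>(\<rho>, L) \<in> \<Gamma>1. \<forall>\<gamma> \<in> \<gamma>s. \<exists>\<gamma>' \<in> \<gamma>s. \<exists>\<gamma>'' \<in> \<gamma>s.
            \<gamma>' \<noteq> \<gamma>'' \<and> (\<rho> {x, \<gamma>}, \<rho> {\<gamma>', \<gamma>''}) \<in> L"
      using assms(7) g1 unfolding k_generated_def by blast+
    have "\<forall>(\<rho>, L) \<in> \<Gamma>2. \<forall>\<gamma> \<in> \<gamma>s. \<exists>\<gamma>' \<in> \<gamma>s. \<exists>\<gamma>'' \<in> \<gamma>s.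
            \<gamma>' \<noteq> \<gamma>'' \<and> (\<rho> {x, \<gamma>}, \<rho> {\<gamma>', \<gamma>''}) \<in> L"
    proof (clarify)
      fix \<rho> L \<gamma> assume rl: "(\<rho>, L) \<in> \<Gamma>2" and g: "\<gamma> \<in> \<gamma>s"
      have ext: "\<rho> \<in> extensional ([A2]\<^bsup>2\<^esup>)" using assms(6) rl unfolding pair_fun_family_def by blast
      have "(restrict \<rho> ([A1]\<^bsup>2\<^esup>), L) \<in> \<Gamma>1" using assms(9) rl unfolding restrict_family_def by force
      then obtain \<gamma>' \<gamma>'' where "\<gamma>' \<in> \<gamma>s" "\<gamma>'' \<in> \<gamma>s" "\<gamma>' \<noteq> \<gamma>''"
        "(restrict \<rho> ([A1]\<^bsup>2\<^esup>) {x, \<gamma>}, restrict \<rho> ([A1]\<^bsup>2\<^esup>) {\<gamma>', \<gamma>''}) \<in> L"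
        using c1 g by fastforce
      then show "\<exists>\<gamma>' \<in> \<gamma>s. \<exists>\<gamma>'' \<in> \<gamma>s. \<gamma>' \<noteq> \<gamma>'' \<and> (\<rho> {x, \<gamma>}, \<rho> {\<gamma>', \<gamma>''}) \<in> L"
        using restr_eq[OF ext assms(2)] xA sub g by (metis subsetD)
    qed
    then show "x \<in> F2 \<gamma>s \<inter> A1" using assms(8) g2 xA assms(2) unfolding k_generated_def by blast
  next
    fix x assume x: "x \<in> F2 \<gamma>s \<inter> A1"
    then have xA: "x \<in> A1" and c2: "\<forall>(\<rho>, L) \<in> \<Gamma>2. \<forall>\<gamma> \<in> \<gamma>s. \<exists>\<gamma>' \<in> \<gamma>s. \<exists>\<gamma>'' \<in> \<gamma>s.
            \<gamma>' \<noteq> \<gamma>'' \<and> (\<rho> {x, \<gamma>}, \<rho> {\<gamma>', \<gamma>''}) \<in> L"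
      using assms(8) g2 unfolding k_generated_def by blast+
    have "\<forall>(\<rho>, L) \<in> \<Gamma>1. \<forall>\<gamma> \<in> \<gamma>s. \<exists>\<gamma>' \<in> \<gamma>s. \<exists>\<gamma>'' \<in> \<gamma>s.
            \<gamma>' \<noteq> \<gamma>'' \<and> (\<rho> {x, \<gamma>}, \<rho> {\<gamma>', \<gamma>''}) \<in> L"
    proof (clarify)
      fix \<rho>1 L \<gamma> assume rl: "(\<rho>1, L) \<in> \<Gamma>1" and g: "\<gamma> \<in> \<gamma>s"
      then obtain \<rho> where rl2: "(\<rho>, L) \<in> \<Gamma>2" and r1: "\<rho>1 = restrict \<rho> ([A1]\<^bsup>2\<^esup>)"
        using assms(9) unfolding restrict_family_def by auto
      have ext: "\<rho> \<in> extensional ([A2]\<^bsup>2\<^esup>)" using assms(6) rl2 unfolding pair_fun_family_def by blast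
      obtain \<gamma>' \<gamma>'' where "\<gamma>' \<in> \<gamma>s" "\<gamma>'' \<in> \<gamma>s" "\<gamma>' \<noteq> \<gamma>''"
        "(\<rho> {x, \<gamma>}, \<rho> {\<gamma>', \<gamma>''}) \<in> L"
        using c2 g rl2 by fastforce
      then show "\<exists>\<gamma>' \<in> \<gamma>s. \<exists>\<gamma>'' \<in> \<gamma>s. \<gamma>' \<noteq> \<gamma>'' \<and> (\<rho>1 {x, \<gamma>}, \<rho>1 {\<gamma>', \<gamma>''}) \<in> L"
        using restr_eq[OF ext assms(2)] xA sub g r1 by (metis subsetD)
    qed
    then show "x \<in> F1 \<gamma>s" using assms(7) g1 xA unfolding k_generated_def by blast
  qed
qed

end
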